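(* For $X>0$ let $N^*(X)$ be the number of finite tuples $(d_1,\dots,d_j)$ (with $j\ge1$ arbitrary, depending on the tuple) of natural numbers $d_k\ge1$ such that $\prod_{k=1}^j(3d_k)\le X$. Then $N^*(X)=0$ for $X<3$, and for every $X>0$, $$N^*(X)\le \Big(\frac X3\Big)^{5/3}.$$ *)

theory Defs
  imports Complex_Main
begin

definition Nstar_set :: "real \<Rightarrow> nat list set" where
  "Nstar_set X = {ds. ds \<noteq> [] \<and> (\<forall>d\<in>set ds. d \<ge> 1) \<and>
                       real (\<Prod>d\<leftarrow>ds. 3 * d) \<le> X}"

definition Nstar :: "real \<Rightarrow> nat" where
  "Nstar X = card (Nstar_set X)"

end

theory Submission
  imports Defs
begin


lemma poly_step:
  fixes a b :: real
  assumes b: "b > 0" and ab: "b < a" and e: "a^3 = b^3 + 1"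
  shows "1 / a^5 \<le> 3 / (2*b^2) - 3 / (2*a^2)"
proof -
  have a0: "a > 0" using b ab by linarith
  have p2: "b^2 \<le> a^2" "b^3 \<le> a^3" "b \<le> a" using ab b by (auto intro: power_mono)
  have "2*b^2*(a-b)*(a^2+a*b+b^2) \<le> 3*a^3*(a-b)*(a+b)"
  proof -
    have "2*b^2*(a^2+a*b+b^2) \<le> 3*a^3*(a+b)"
    proof -
      have h1: "a^2*b^2 \<le> a^2*a^2" using p2 a0 by (intro mult_left_mono) auto
      have h2a: "a*b^3 \<le> a*a^3" using p2 a0 by (intro mult_left_mono) auto
      have h2b: "b^3 * a \<le> a^3*b"
      proof -
        have "b^2 * (a*b) \<le> a^2*(a*b)" using p2 a0 b by (intro mult_right_mono) auto
        thus ?thesis by (simp add: power2_eq_square power3_eq_cube algebra_simps)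
      qed
      have h3: "b^3*b \<le> a^3*b" using p2 b by (intro mult_right_mono) auto
      have e1: "2*b^2*(a^2+a*b+b^2) = 2*(a^2*b^2) + (a*b^3 + b^3*a) + 2*(b^3*b)"
        by (simp add: algebra_simps power2_eq_square power3_eq_cube)
      have e2: "3*a^3*(a+b) = 3*(a^2*a^2) + 3*(a^3*b)" "a*a^3 = a^2*a^2"
        by (simp_all add: algebra_simps power2_eq_square power3_eq_cube)
      show ?thesis using h1 h2a h2b h3 e1 e2 by linarith
    qed
    hence "2*b^2*(a^2+a*b+b^2)*(a-b) \<le> 3*a^3*(a+b)*(a-b)" using ab by (simp add: mult_right_mono)
    thus ?thesis by (simp add: algebra_simps)
  qed
  moreover have F: "(a-b)*(a^2+a*b+b^2) = 1" using e by (simp add: algebra_simps power2_eq_square power3_eq_cube)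
  moreover have "2*b^2*(a-b)*(a^2+a*b+b^2) = 2*b^2*((a-b)*(a^2+a*b+b^2))" by (simp only: mult.assoc)
  moreover have "3*a^3*(a-b)*(a+b) = 3*a^3*(a^2-b^2)" by (simp add: algebra_simps power2_eq_square)
  ultimately have key: "2*b^2 \<le> 3*a^3*(a^2-b^2)" by simp
  have "a^2*(2*b^2) \<le> a^2*(3*a^3*(a^2-b^2))" using key by (intro mult_left_mono) auto
  moreover have "a^2*(3*a^3*(a^2-b^2)) = a^2*(3*a^5) - b^2*(3*a^5)" by algebra
  ultimately have key2: "a^2*(2*b^2) + b^2*(3*a^5) \<le> a^2*(3*a^5)" by linarith
  show ?thesis using key2 a0 b
    by (simp add: field_simps power2_eq_square)
qed

lemma cube_root_facts:
  fixes x :: real assumes "x > 0"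
  shows "(x powr (1/3))^3 = x" "(x powr (1/3))^2 = x powr (2/3)" "(x powr (1/3))^5 = x powr (5/3)"
  using assms by (simp_all add: powr_power)

lemma step_powr:
  fixes x :: real assumes x: "x \<ge> 1"
  shows "1/((x+1) powr (5/3)) \<le> 3/(2*x powr (2/3)) - 3/(2*(x+1) powr (2/3))"
proof -
  define a where "a = (x+1) powr (1/3)"
  define b where "b = x powr (1/3)"
  have b0: "b > 0" using x by (simp add: b_def)
  have a3: "a^3 = x+1" and b3: "b^3 = x" using x cube_root_facts(1) unfolding a_def b_def by auto
  have ab: "b < a"
  proof (rule ccontr)
    assume "\<not> b < a" hence "a \<le> b" by simp
    moreover have "a \<ge> 0" by (simp add: a_def)
    ultimately have "a^3 \<le> b^3" by (intro power_mono) auto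
    thus False using a3 b3 by simp
  qed
  have "1 / a^5 \<le> 3 / (2*b^2) - 3 / (2*a^2)" using poly_step[OF b0 ab] a3 b3 by simp
  thus ?thesis using x cube_root_facts[of x] cube_root_facts[of "x+1"] unfolding a_def b_def by simp
qed

lemma sum_bound:
  fixes n :: nat assumes "n \<ge> 1"
  shows "(\<Sum>d=1..n. 1/(real d powr (5/3))) \<le> 5/2 - 3/(2*real n powr (2/3))"
  using assms
proof (induction n rule: dec_induct)
  case base
  then show ?case by simp
next
  case (step n)
  have "1/(real (Suc n) powr (5/3)) \<le> 3/(2*real n powr (2/3)) - 3/(2*real (Suc n) powr (2/3))"
    using step_powr[of "real n"] step.hyps by (simp add: add.commute)
  then show ?case using step.IH by simp
qed

lemma aux: fixes P c :: real assumes "P \<ge> 0" "c \<ge> 5" shows "P/c*(5/2) \<le> P/2"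
proof -
  have "P*5 \<le> P*c" using assms by (intro mult_left_mono) auto
  thus ?thesis using assms by (simp add: field_simps)
qed

lemma cube_le: fixes a b :: real assumes "0 \<le> b" "a^3 \<le> b^3" shows "a \<le> b"
proof (rule ccontr)
  assume "\<not> a \<le> b" hence "b < a" by simp
  hence "b^3 < a^3" using assms(1) by (intro power_strict_mono) auto
  thus False using assms(2) by simp
qed


lemma final_ineq:
  fixes Y :: real and n :: nat
  assumes Y: "Y \<ge> 3" and n: "real n \<le> Y" "n \<ge> 1"
  shows "real n + (Y/3) powr (5/3) * (\<Sum>d=1..n. 1/(real d powr (5/3))) \<le> Y powr (5/3)"
proof -
  define w where "w = Y powr (1/3)"
  have w0: "w > 0" using Y by (simp add: w_def)
  have w3: "w^3 = Y" using Y cube_root_facts(1)[of Y] unfolding w_def by linarith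
  have w5: "w^5 = Y powr (5/3)" using Y cube_root_facts(3)[of Y] unfolding w_def by linarith
  have c: "3 powr (5/3) \<ge> (5::real)"
  proof -
    define t where "t = (3::real) powr (1/3)"
    have t3: "t^3 = 3" using cube_root_facts[of 3] by (simp add: t_def)
    have t0: "t > 0" by (simp add: t_def)
    have "(t^5)^3 = (t^3)^5" by (simp only: power_mult[symmetric] mult.commute)
    moreover have "(t^3)^5 = (243::real)" unfolding t3 by simp
    ultimately have "(t^5)^3 = 243" by simp
    moreover have "(5::real)^3 = 125" by simp
    ultimately have c53: "5^3 \<le> (t^5)^3" by linarith
    have "0 \<le> t^5" using t0 by simp
    from cube_le[OF this c53] have "t^5 \<ge> 5" .
    moreover have "t^5 = 3 powr (5/3)" using cube_root_facts(3)[of 3] unfolding t_def by linarith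
    ultimately show ?thesis by linarith
  qed
  have S: "(\<Sum>d=1..n. 1/(real d powr (5/3))) \<le> 5/2"
  proof -
    have "0 \<le> 3/(2*real n powr (2/3))" by simp
    thus ?thesis using sum_bound[OF n(2)] by linarith
  qed
  have Y1: "(Y/3) powr (5/3) = Y powr (5/3) / 3 powr (5/3)" by (simp add: powr_divide)
  have "(Y/3) powr (5/3) * (\<Sum>d=1..n. 1/(real d powr (5/3))) \<le> (Y/3) powr (5/3) * (5/2)"
    using S by (intro mult_left_mono) auto
  also have "\<dots> \<le> Y powr (5/3) / 2"
    unfolding Y1 using c by (intro aux) auto
  finally have A: "(Y/3) powr (5/3) * (\<Sum>d=1..n. 1/(real d powr (5/3))) \<le> Y powr (5/3) / 2" .
  have "(w^2)^3 = (w^3)^2" by (simp only: power_mult[symmetric] mult.commute)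
  hence "(w^2)^3 = Y^2" using w3 by simp
  moreover have "Y^2 \<ge> 3^2" using Y by (intro power_mono) auto
  moreover have "(2::real)^3 = 8" "(3::real)^2 = 9" by simp_all
  ultimately have c23: "2^3 \<le> (w^2)^3" by linarith
  have "0 \<le> w^2" by simp
  from cube_le[OF this c23] have w2: "w^2 \<ge> 2" .
  have "0 \<le> w^3" using w0 by simp
  from mult_left_mono[OF w2 this] have "w^3 * 2 \<le> w^3 * w^2" .
  moreover have "w^3 * w^2 = w^5" by (simp add: power_add[symmetric])
  ultimately have "2*Y \<le> Y powr (5/3)" using w3 w5 by (simp add: mult.commute)
  thus ?thesis using A n(1) by linarith
qed


lemma prod_ge1: "(\<forall>d\<in>set ds. d \<ge> 1) \<Longrightarrow> (\<Prod>d\<leftarrow>ds. 3 * d) \<ge> (1::nat)"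
  by (induction ds) (auto simp: one_le_mult_iff)

lemma prod_ge3: "ds \<noteq> [] \<Longrightarrow> (\<forall>d\<in>set ds. d \<ge> 1) \<Longrightarrow> (\<Prod>d\<leftarrow>ds. 3 * d) \<ge> (3::nat)"
proof (cases ds)
  case (Cons d rest)
  assume h: "\<forall>d\<in>set ds. d \<ge> 1"
  have p1: "(\<Prod>d\<leftarrow>rest. 3 * d) \<ge> (1::nat)" by (rule prod_ge1) (use h Cons in auto)
  have p3: "3 \<le> 3 * d" using h Cons by auto
  have "3 * 1 \<le> (3 * d) * (\<Prod>d\<leftarrow>rest. 3 * d)" by (rule mult_le_mono[OF p3 p1])
  thus ?thesis using Cons by simp
qed simp

lemma small_empty: "X < 3 \<Longrightarrow> Nstar_set X = {}"
proof (rule ccontr)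
  assume X: "X < 3" and "Nstar_set X \<noteq> {}"
  then obtain ds where "ds \<in> Nstar_set X" by blast
  hence ne: "ds \<noteq> []" and all: "\<forall>d\<in>set ds. d \<ge> 1" and pr: "real (\<Prod>d\<leftarrow>ds. 3 * d) \<le> X"
    unfolding Nstar_set_def by auto
  have "(\<Prod>d\<leftarrow>ds. 3 * d) \<ge> (3::nat)" by (rule prod_ge3[OF ne all])
  hence "real (\<Prod>d\<leftarrow>ds. 3 * d) \<ge> 3" by linarith
  thus False using pr X by linarith
qed

lemma decomp:
  assumes "X \<ge> 0"
  shows "Nstar_set X \<subseteq> (\<lambda>d. [d]) ` {1..nat \<lfloor>X/3\<rfloor>} \<union>
           (\<Union>d\<in>{1..nat \<lfloor>X/3\<rfloor>}. (Cons d) ` Nstar_set (X / (3 * real d)))"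
proof
  fix ds assume "ds \<in> Nstar_set X"
  hence ne: "ds \<noteq> []" and all: "\<forall>d\<in>set ds. d \<ge> 1" and pr: "real (\<Prod>d\<leftarrow>ds. 3 * d) \<le> X"
    unfolding Nstar_set_def by auto
  obtain d rest where ds: "ds = d # rest" using ne by (cases ds) auto
  define P where "P = (\<Prod>d\<leftarrow>rest. 3 * d)"
  have P1: "P \<ge> 1" unfolding P_def by (rule prod_ge1) (use all ds in auto)
  have d1: "d \<ge> 1" using all ds by auto
  have prd: "real (3 * d) * real P \<le> X" using pr ds unfolding P_def by simp
  have P1r: "1 \<le> real P" using P1 by simp
  have "0 \<le> real (3*d)" by simp
  from mult_left_mono[OF P1r this] have "real (3*d) * 1 \<le> real (3*d) * real P" .
  hence "3 * real d \<le> X" using prd by simp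
  hence "real d \<le> X / 3" by simp
  hence "int d \<le> \<lfloor>X/3\<rfloor>" by (simp add: le_floor_iff)
  hence "d \<le> nat \<lfloor>X/3\<rfloor>" by linarith
  hence dmem: "d \<in> {1..nat \<lfloor>X/3\<rfloor>}" using d1 by simp
  show "ds \<in> (\<lambda>d. [d]) ` {1..nat \<lfloor>X/3\<rfloor>} \<union>
           (\<Union>d\<in>{1..nat \<lfloor>X/3\<rfloor>}. (Cons d) ` Nstar_set (X / (3 * real d)))"
  proof (cases "rest = []")
    case True then show ?thesis using ds dmem by auto
  next
    case False
    have "real P \<le> X / (3 * real d)" using prd d1 by (simp add: field_simps)
    hence "rest \<in> Nstar_set (X / (3 * real d))" using False all ds unfolding Nstar_set_def P_def by auto
    then show ?thesis using ds dmem by auto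
  qed
qed



lemma main_ind:
  "nat \<lfloor>X\<rfloor> = n \<Longrightarrow> finite (Nstar_set X) \<and>
     real (card (Nstar_set X)) \<le> (if X < 3 then 0 else (X/3) powr (5/3))"
proof (induction n arbitrary: X rule: less_induct)
  case (less n)
  show ?case
  proof (cases "X < 3")
    case True then show ?thesis using small_empty by simp
  next
    case False
    hence X3: "X \<ge> 3" by simp
    define m where "m = nat \<lfloor>X/3\<rfloor>"
    define Y where "Y = X/3"
    have Y1: "Y \<ge> 1" using X3 by (simp add: Y_def)
    have m1: "m \<ge> 1" using Y1 unfolding m_def Y_def by linarith
    have mY: "real m \<le> Y" unfolding m_def Y_def using Y1 Y_def by linarith
    define X' where "X' = (\<lambda>d::nat. X / (3 * real d))"
    have IH: "finite (Nstar_set (X' d)) \<and>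
       real (card (Nstar_set (X' d))) \<le> (if X' d < 3 then 0 else (X' d/3) powr (5/3))"
      if d: "d \<in> {1..m}" for d
    proof -
      have d1: "real d \<ge> 1" using d by simp
      have "X' d \<le> X / 3" unfolding X'_def using d1 X3 by (simp add: field_simps mult_left_mono)
      moreover have "X' d \<ge> 0" unfolding X'_def using X3 by simp
      ultimately have "nat \<lfloor>X' d\<rfloor> < n" using less.prems X3 by linarith
      thus ?thesis using less.IH by blast
    qed
    have dec: "Nstar_set X \<subseteq> (\<lambda>d. [d]) ` {1..m} \<union> (\<Union>d\<in>{1..m}. (Cons d) ` Nstar_set (X' d))"
      using decomp[of X] X3 unfolding m_def X'_def by simp
    have fin: "finite (Nstar_set X)"
      by (rule finite_subset[OF dec]) (use IH in auto)
    have "card (Nstar_set X) \<le> card ((\<lambda>d. [d]) ` {1..m} \<union> (\<Union>d\<in>{1..m}. (Cons d) ` Nstar_set (X' d)))"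
      by (rule card_mono[OF _ dec]) (use IH in auto)
    also have "\<dots> \<le> card ((\<lambda>d. [d]) ` {1..m}) + card (\<Union>d\<in>{1..m}. (Cons d) ` Nstar_set (X' d))"
      by (rule card_Un_le)
    also have "\<dots> \<le> m + (\<Sum>d\<in>{1..m}. card ((Cons d) ` Nstar_set (X' d)))"
      using card_image_le[of "{1..m}" "\<lambda>d. [d]"] card_UN_le[of "{1..m}" "\<lambda>d. (Cons d) ` Nstar_set (X' d)"]
      by simp
    also have "\<dots> \<le> m + (\<Sum>d\<in>{1..m}. card (Nstar_set (X' d)))"
      by (intro add_left_mono sum_mono card_image_le) (use IH in auto)
    finally have c1: "real (card (Nstar_set X)) \<le> real m + (\<Sum>d\<in>{1..m}. real (card (Nstar_set (X' d))))"
      by (metis of_nat_add of_nat_le_iff of_nat_sum)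
    show ?thesis
    proof (cases "Y < 3")
      case True
      have "real (card (Nstar_set (X' d))) \<le> 0" if d: "d \<in> {1..m}" for d
      proof -
        have d1: "real d \<ge> 1" using d by simp
        have "X' d \<le> X / 3" unfolding X'_def using d1 X3 by (simp add: field_simps mult_left_mono)
        hence "X' d < 3" using True Y_def by simp
        thus ?thesis using IH[OF d] by simp
      qed
      hence "(\<Sum>d\<in>{1..m}. real (card (Nstar_set (X' d)))) \<le> 0" by (intro sum_nonpos) auto
      hence "real (card (Nstar_set X)) \<le> Y" using c1 mY by linarith
      also have "Y = Y powr 1" using Y1 by simp
      also have "\<dots> \<le> Y powr (5/3)" using Y1 by (intro powr_mono) auto
      finally show ?thesis using fin X3 Y_def by simp
    next
      case False
      have b: "real (card (Nstar_set (X' d))) \<le> (Y/3) powr (5/3) * (1 / (real d powr (5/3)))"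
        if d: "d \<in> {1..m}" for d
      proof -
        have d1: "real d \<ge> 1" using d by simp
        have "X' d / 3 = (Y/3) / real d" unfolding X'_def Y_def using d1 by (simp add: field_simps)
        hence "(X' d/3) powr (5/3) = (Y/3) powr (5/3) / (real d powr (5/3))"
          by (simp only: powr_divide[of "Y/3" "real d"])
        hence e: "(X' d/3) powr (5/3) = (Y/3) powr (5/3) * (1 / (real d powr (5/3)))"
          by simp
        have "0 \<le> (Y/3) powr (5/3) * (1 / (real d powr (5/3)))" by simp
        thus ?thesis using IH[OF d] e by (auto split: if_splits)
      qed
      have "(\<Sum>d\<in>{1..m}. real (card (Nstar_set (X' d)))) \<le>
            (\<Sum>d\<in>{1..m}. (Y/3) powr (5/3) * (1 / (real d powr (5/3))))"
        by (intro sum_mono b)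
      also have "\<dots> = (Y/3) powr (5/3) * (\<Sum>d=1..m. 1/(real d powr (5/3)))"
        by (simp add: sum_distrib_left)
      finally have "real (card (Nstar_set X)) \<le> real m + (Y/3) powr (5/3) * (\<Sum>d=1..m. 1/(real d powr (5/3)))"
        using c1 by linarith
      also have "\<dots> \<le> Y powr (5/3)" using final_ineq[of Y m] False mY m1 by simp
      finally show ?thesis using fin X3 Y_def by simp
    qed
  qed
qed

theorem lemma3:
  fixes X :: real
  assumes "X > 0"
  shows "finite (Nstar_set X) \<and> (X < 3 \<longrightarrow> Nstar X = 0) \<and>
         real (Nstar X) \<le> (X / 3) powr (5 / 3)"
proof -
  have m: "finite (Nstar_set X) \<and> real (card (Nstar_set X)) \<le> (if X < 3 then 0 else (X/3) powr (5/3))"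
    using main_ind by blast
  show ?thesis
  proof (cases "X < 3")
    case True then show ?thesis using m small_empty unfolding Nstar_def by simp
  next
    case False then show ?thesis using m unfolding Nstar_def by simp
  qed
qed


end
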